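(* Let $E$ and $M$ be PVMs on a finite-dimensional Hilbert space with $w(E)<\infty$, $w(M)=1$ and $M\ge E$, and let $\rho,\rho'$ be density operators commuting with $E$, with $\rho'$ positive definite. Then for every $a\in\mathbb{R}$, $$\mathrm{P}^M_\rho\{-\log\mathrm{P}^M_{\rho'}(\omega)\ge a\}\le\exp\Bigl(-\sup_{0\le t\le1}\bigl((a-\log w(E))t-\log\mathrm{Tr}\rho\rho'^{-t}\bigr)\Bigr).$$
   Context: $\mathrm{P}^M_\rho(\omega)=\mathrm{Tr}\rho M_\omega$. For PVMs $E=\{E_i\}$, $M=\{M_j\}$, $M\ge E$ means each $E_i$ is a sum of some $M_j$; commuting with $E$ means $\rho E_i=E_i\rho$ for all $i$; $w(E)=\sup_i\dim(\mathrm{range}\,E_i)$. *)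

theory Defs
  imports "HOL-Analysis.Analysis"
begin

definition adj :: "complex^'n^'n \<Rightarrow> complex^'n^'n" where
  "adj A = (\<chi> i j. cnj (A $ j $ i))"

definition cinner :: "complex^'n \<Rightarrow> complex^'n \<Rightarrow> complex" where
  "cinner x y = (\<Sum>i\<in>UNIV. cnj (x $ i) * y $ i)"

definition hermitian :: "complex^'n^'n \<Rightarrow> bool" where
  "hermitian A \<longleftrightarrow> adj A = A"

definition unitary :: "complex^'n^'n \<Rightarrow> bool" where
  "unitary U \<longleftrightarrow> adj U ** U = mat 1 \<and> U ** adj U = mat 1"

definition positive_semidef :: "complex^'n^'n \<Rightarrow> bool" where
  "positive_semidef A \<longleftrightarrow> hermitian A \<and> (\<forall>x. 0 \<le> Re (cinner x (A *v x)))"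

definition positive_def :: "complex^'n^'n \<Rightarrow> bool" where
  "positive_def A \<longleftrightarrow> hermitian A \<and> (\<forall>x. x \<noteq> 0 \<longrightarrow> 0 < Re (cinner x (A *v x)))"

definition density_op :: "complex^'n^'n \<Rightarrow> bool" where
  "density_op \<rho> \<longleftrightarrow> positive_semidef \<rho> \<and> trace \<rho> = 1"

definition diag_mat :: "('n \<Rightarrow> complex) \<Rightarrow> complex^'n^'n" where
  "diag_mat d = (\<chi> i j. if i = j then d i else 0)"

definition mat_rpow :: "complex^'n^'n \<Rightarrow> real \<Rightarrow> complex^'n^'n" where
  "mat_rpow A t = (SOME B. \<exists>U (d::'n \<Rightarrow> real). unitary U \<and> (\<forall>i. 0 < d i) \<and>
      A = U ** diag_mat (\<lambda>i. complex_of_real (d i)) ** adj U \<and>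
      B = U ** diag_mat (\<lambda>i. complex_of_real (d i powr t)) ** adj U)"

definition pvm :: "'i set \<Rightarrow> ('i \<Rightarrow> complex^'n^'n) \<Rightarrow> bool" where
  "pvm I E \<longleftrightarrow> finite I \<and>
     (\<forall>i\<in>I. adj (E i) = E i \<and> E i ** E i = E i) \<and>
     (\<forall>i\<in>I. \<forall>j\<in>I. i \<noteq> j \<longrightarrow> E i ** E j = 0) \<and>
     (\<Sum>i\<in>I. E i) = mat 1"

definition pvm_finer :: "'j set \<Rightarrow> ('j \<Rightarrow> complex^'n^'n) \<Rightarrow> 'i set \<Rightarrow> ('i \<Rightarrow> complex^'n^'n) \<Rightarrow> bool" where
  "pvm_finer J M I E \<longleftrightarrow> (\<forall>i\<in>I. \<exists>S\<subseteq>J. E i = (\<Sum>j\<in>S. M j))"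

definition commutes_with :: "complex^'n^'n \<Rightarrow> 'i set \<Rightarrow> ('i \<Rightarrow> complex^'n^'n) \<Rightarrow> bool" where
  "commutes_with \<rho> I E \<longleftrightarrow> (\<forall>i\<in>I. \<rho> ** E i = E i ** \<rho>)"

text \<open>\<open>w(E) = sup_i dim(range E_i)\<close>; the rank is the complex dimension of the range.\<close>
definition pvm_width :: "'i set \<Rightarrow> ('i \<Rightarrow> complex^'n^'n) \<Rightarrow> nat" where
  "pvm_width I E = Max ((\<lambda>i. rank (E i)) ` I)"

definition prob_dist :: "('j \<Rightarrow> complex^'n^'n) \<Rightarrow> complex^'n^'n \<Rightarrow> 'j \<Rightarrow> real" where
  "prob_dist M \<rho> \<omega> = Re (trace (\<rho> ** M \<omega>))"

end

theory Submission
  imports Defs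
begin

lemma cinner_add_right: "cinner x (y + z) = cinner x y + cinner x z"
  by (simp add: cinner_def distrib_left sum.distrib)
lemma cinner_add_left: "cinner (x + y) z = cinner x z + cinner y z"
  by (simp add: cinner_def distrib_right sum.distrib)
lemma cinner_diff_right: "cinner x (y - z) = cinner x y - cinner x z"
  by (simp add: cinner_def right_diff_distrib sum_subtractf)
lemma cinner_diff_left: "cinner (x - y) z = cinner x z - cinner y z"
  by (simp add: cinner_def left_diff_distrib sum_subtractf)
lemma cinner_scale_right: "cinner x (c *s y) = c * cinner x y"
  by (simp add: cinner_def sum_distrib_left mult.left_commute)
lemma cinner_scale_left: "cinner (c *s x) y = cnj c * cinner x y"
  by (simp add: cinner_def sum_distrib_left mult.assoc)
lemma cinner_zero_right[simp]: "cinner x 0 = 0"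
  by (simp add: cinner_def)
lemma cinner_zero_left[simp]: "cinner 0 x = 0"
  by (simp add: cinner_def)
lemma cinner_sum_right: "cinner x (sum f S) = (\<Sum>i\<in>S. cinner x (f i))"
  by (induction S rule: infinite_finite_induct) (auto simp: cinner_add_right)
lemma cinner_sum_left: "cinner (sum f S) x = (\<Sum>i\<in>S. cinner (f i) x)"
  by (induction S rule: infinite_finite_induct) (auto simp: cinner_add_left)
lemma cinner_commute: "cinner y x = cnj (cinner x y)"
  by (simp add: cinner_def mult.commute)
lemma cinner_self: "cinner x x = complex_of_real (\<Sum>i\<in>UNIV. (cmod (x$i))\<^sup>2)"
  unfolding cinner_def of_real_sum by (rule sum.cong) (auto simp: mult.commute intro: complex_norm_square[symmetric, unfolded of_real_power])
lemma cinner_self_Re: "Re (cinner x x) = (\<Sum>i\<in>UNIV. (cmod (x$i))\<^sup>2)"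
  by (simp add: cinner_self)
lemma cinner_self_real: "complex_of_real (Re (cinner x x)) = cinner x x"
  by (simp add: cinner_self)
lemma cinner_self_nonneg: "0 \<le> Re (cinner x x)"
  by (simp add: cinner_self_Re sum_nonneg)
lemma cinner_self_eq0: "Re (cinner x x) = 0 \<longleftrightarrow> x = 0"
proof
  assume "Re (cinner x x) = 0"
  then have "\<forall>i\<in>UNIV. (cmod (x$i))\<^sup>2 = 0"
    by (subst sum_nonneg_eq_0_iff[symmetric]) (auto simp: cinner_self_Re)
  then show "x = 0" by (simp add: vec_eq_iff)
qed simp
lemma cinner_adj: "cinner x (A *v y) = cinner (adj A *v x) y"
  apply (simp add: cinner_def adj_def matrix_vector_mult_def sum_distrib_left sum_distrib_right)
  apply (subst sum.swap)
  apply (simp add: mult_ac)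
  done
lemma adj_adj[simp]: "adj (adj A) = A"
  by (simp add: adj_def vec_eq_iff)
lemma adj_mult: "adj (A ** B) = adj B ** adj A"
  by (simp add: adj_def vec_eq_iff matrix_matrix_mult_def mult.commute)
lemma adj_mat1[simp]: "adj (mat 1) = mat 1"
  by (simp add: adj_def vec_eq_iff mat_def)
lemma adj_sum: "adj (sum f S) = (\<Sum>i\<in>S. adj (f i))"
  by (induction S rule: infinite_finite_induct) (auto simp: adj_def vec_eq_iff)
lemma adj_zero[simp]: "adj 0 = 0"
  by (simp add: adj_def vec_eq_iff)
lemma cinner_adj_herm: "adj A = A \<Longrightarrow> cinner x (A *v y) = cinner (A *v x) y"
  by (metis cinner_adj)
lemma sum_mvec: "(sum f S) *v x = (\<Sum>i\<in>S. f i *v x)"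
  by (induction S rule: infinite_finite_induct) (auto simp: matrix_vector_mult_add_rdistrib)
lemma mult_sum_right: "A ** (sum f S) = (\<Sum>i\<in>S. A ** f i)"
  by (induction S rule: infinite_finite_induct) (auto simp: matrix_add_ldistrib)
lemma mult_sum_left: "(sum f S) ** A = (\<Sum>i\<in>S. f i ** A)"
  by (induction S rule: infinite_finite_induct) (auto simp: vec_eq_iff matrix_matrix_mult_def sum.distrib distrib_right)
lemma trace_sum: "trace (sum f S) = (\<Sum>i\<in>S. trace (f i :: complex^'n^'n))"
  by (induction S rule: infinite_finite_induct) (auto simp: trace_add trace_0[unfolded mat_0])
lemma herm_quad_real: "adj A = A \<Longrightarrow> complex_of_real (Re (cinner x (A *v x))) = cinner x (A *v x)"
  by (metis cinner_adj cinner_commute complex_cnj_cancel_iff complex_is_Real_iff Reals_cnj_iff of_real_Re)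
lemma mvec_scale: "A *v (c *s x) = c *s (A *v (x::complex^'n))"
  by (simp add: vec_eq_iff matrix_vector_mult_def sum_distrib_left mult_ac)
lemma norm_cinner: "(norm x)\<^sup>2 = Re (cinner x x)"
  by (simp add: norm_vec_def L2_set_def cinner_self_Re sum_nonneg)
lemma cinner_scale_self: "Re (cinner (c *s x) (c *s x)) = (cmod c)\<^sup>2 * Re (cinner x x)"
  by (simp add: cinner_self_Re norm_mult power_mult_distrib sum_distrib_left)
lemma cont_cinner: "continuous_on UNIV (\<lambda>x. cinner (a::complex^'n) x)"
  unfolding cinner_def by (intro continuous_intros continuous_on_component continuous_on_id)
lemma cont_quad: "continuous_on UNIV (\<lambda>x. Re (cinner x ((A::complex^'n^'n) *v x)))"
  unfolding cinner_def matrix_vector_mult_def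
  by (intro continuous_intros continuous_on_component continuous_on_id continuous_on_cnj)

lemma perp_exists:
  fixes u :: "'n \<Rightarrow> complex^'n"
  assumes K: "K \<noteq> (UNIV::'n set)"
    and on: "\<forall>i\<in>K. \<forall>j\<in>K. cinner (u i) (u j) = (if i = j then 1 else 0)"
  shows "\<exists>x. x \<noteq> 0 \<and> (\<forall>i\<in>K. cinner (u i) x = 0)"
proof -
  have cK: "card K < CARD('n)"
    using K by (intro psubset_card_mono) auto
  have "\<not> (UNIV \<subseteq> vec.span (u ` K))"
  proof
    assume "UNIV \<subseteq> vec.span (u ` K)"
    then have "vec.dim (UNIV::(complex^'n) set) \<le> card (u ` K)"
      by (intro vec.dim_le_card) auto
    also have "\<dots> \<le> card K" by (rule card_image_le) simp
    finally have "vec.dim (UNIV::(complex^'n) set) \<le> card K" .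
    then show False using cK unfolding vec_dim_card by simp
  qed
  then obtain e where e: "e \<notin> vec.span (u ` K)" by auto
  define x where "x = e - (\<Sum>i\<in>K. cinner (u i) e *s u i)"
  have "x \<noteq> 0"
  proof
    assume "x = 0"
    then have "e = (\<Sum>i\<in>K. cinner (u i) e *s u i)" by (simp add: x_def)
    also have "\<dots> \<in> vec.span (u ` K)"
      by (intro vec.span_sum vec.span_scale vec.span_base) auto
    finally show False using e by simp
  qed
  moreover have "\<forall>j\<in>K. cinner (u j) x = 0"
  proof
    fix j assume j: "j \<in> K"
    have "cinner (u j) x = cinner (u j) e - (\<Sum>i\<in>K. cinner (u i) e * cinner (u j) (u i))"
      by (simp add: x_def cinner_diff_right cinner_sum_right cinner_scale_right)
    also have "(\<Sum>i\<in>K. cinner (u i) e * cinner (u j) (u i)) = (\<Sum>i\<in>K. if i = j then cinner (u i) e else 0)"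
      by (rule sum.cong) (use on j in auto)
    also have "\<dots> = cinner (u j) e" using j by simp
    finally show "cinner (u j) x = 0" by simp
  qed
  ultimately show ?thesis by blast
qed

lemma herm_eigvec_perp:
  fixes A :: "complex^'n^'n" and u :: "'k \<Rightarrow> complex^'n"
  assumes herm: "adj A = A"
    and x0: "x0 \<noteq> 0" "\<forall>i\<in>K. cinner (u i) x0 = 0"
    and eig: "\<forall>i\<in>K. A *v u i = lam i *s u i"
  shows "\<exists>v l. cinner v v = 1 \<and> (\<forall>i\<in>K. cinner (u i) v = 0) \<and> A *v v = l *s v"
proof -
  define W where "W = {x. \<forall>i\<in>K. cinner (u i) x = 0}"
  have Wsc: "c *s x \<in> W" if "x \<in> W" for x c using that by (simp add: W_def cinner_scale_right)
  have Wadd: "x + y \<in> W" if "x \<in> W" "y \<in> W" for x y using that by (simp add: W_def cinner_add_right)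
  have Wdiff: "x - y \<in> W" if "x \<in> W" "y \<in> W" for x y using that by (simp add: W_def cinner_diff_right)
  have cW: "closed W"
  proof -
    have "W = (\<Inter>i\<in>K. {x. cinner (u i) x = 0})" by (auto simp: W_def)
    moreover have "closed {x. cinner (u i) x = 0}" for i
      by (intro closed_Collect_eq continuous_on_const cont_cinner)
    ultimately show ?thesis by auto
  qed
  define S where "S = sphere (0::complex^'n) 1 \<inter> W"
  have cS: "compact S" unfolding S_def by (intro compact_Int_closed compact_sphere cW)
  have S_iff: "x \<in> S \<longleftrightarrow> Re (cinner x x) = 1 \<and> x \<in> W" for x
  proof -
    have "norm x = 1 \<longleftrightarrow> (norm x)\<^sup>2 = 1" by (smt (verit) norm_ge_zero power2_eq_1_iff)
    then show ?thesis by (simp add: S_def norm_cinner)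
  qed
  have unit: "complex_of_real (1 / norm x) *s x \<in> S" if "x \<in> W" "x \<noteq> 0" for x
  proof -
    have "Re (cinner (complex_of_real (1 / norm x) *s x) (complex_of_real (1 / norm x) *s x)) = 1"
      unfolding cinner_scale_self norm_cinner[of x, symmetric] using that
      by (simp add: power_divide norm_divide)
    then show ?thesis using that Wsc S_iff by blast
  qed
  have x0W: "x0 \<in> W" using x0 by (simp add: W_def)
  define f where "f x = Re (cinner x (A *v x))" for x
  have "S \<noteq> {}" using unit[OF x0W x0(1)] by blast
  moreover have "continuous_on S f" unfolding f_def by (rule continuous_on_subset[OF cont_quad]) simp
  ultimately obtain x1 where x1S: "x1 \<in> S" and x1max: "\<forall>y\<in>S. f y \<le> f x1"
    using continuous_attains_sup[OF cS] by blast
  define l where "l = f x1"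
  have x1W: "x1 \<in> W" and x1n: "Re (cinner x1 x1) = 1" using x1S S_iff by auto
  have quadb: "f v \<le> l * Re (cinner v v)" if "v \<in> W" for v
  proof (cases "v = 0")
    case True then show ?thesis by (simp add: f_def)
  next
    case False
    define c where "c = complex_of_real (1 / norm v)"
    have "f (c *s v) \<le> l" using x1max unit[OF that False] by (simp add: c_def l_def)
    moreover have "f (c *s v) = (cmod c)\<^sup>2 * f v"
      by (simp add: f_def mvec_scale cinner_scale_left cinner_scale_right mult.assoc[symmetric]
          complex_norm_square[symmetric])
    moreover have "(cmod c)\<^sup>2 = 1 / Re (cinner v v)" using False
      by (simp add: c_def norm_cinner[symmetric] power_divide norm_divide)
    moreover have "Re (cinner v v) > 0" using False cinner_self_nonneg[of v] cinner_self_eq0[of v] by linarith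
    ultimately show ?thesis by (simp add: field_simps)
  qed
  define r where "r = A *v x1 - complex_of_real l *s x1"
  have rW: "r \<in> W"
  proof -
    have "\<forall>i\<in>K. cinner (u i) (A *v x1) = 0"
    proof
      fix i assume i: "i \<in> K"
      have "cinner (u i) (A *v x1) = cinner (A *v u i) x1" using herm by (simp add: cinner_adj_herm)
      also have "\<dots> = 0" using i eig x1W by (simp add: cinner_scale_left W_def)
      finally show "cinner (u i) (A *v x1) = 0" .
    qed
    then have "A *v x1 \<in> W" by (simp add: W_def)
    then show ?thesis unfolding r_def using x1W Wsc Wdiff by blast
  qed
  define \<beta> where "\<beta> = Re (cinner r r)"
  define \<gamma> where "\<gamma> = f r - l * Re (cinner r r)"
  have key: "2 * s * \<beta> + s\<^sup>2 * \<gamma> \<le> 0" for s :: real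
  proof -
    define v where "v = x1 + complex_of_real s *s r"
    have vW: "v \<in> W" unfolding v_def using x1W rW Wsc Wadd by blast
    have h1: "cinner x1 (A *v r) = cnj (cinner r (A *v x1))"
      using herm by (metis cinner_adj_herm cinner_commute)
    have fv: "f v = f x1 + 2 * s * Re (cinner r (A *v x1)) + s\<^sup>2 * f r"
      unfolding f_def v_def
      by (simp add: matrix_vector_right_distrib mvec_scale cinner_add_left cinner_add_right
          cinner_scale_left cinner_scale_right h1 power2_eq_square algebra_simps)
    have h2: "cinner x1 r = cnj (cinner r x1)" by (metis cinner_commute)
    have nv: "Re (cinner v v) = 1 + 2 * s * Re (cinner r x1) + s\<^sup>2 * Re (cinner r r)"
      unfolding v_def using x1n
      by (simp add: cinner_add_left cinner_add_right cinner_scale_left cinner_scale_right h2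
          power2_eq_square algebra_simps)
    have rr: "Re (cinner r r) = Re (cinner r (A *v x1)) - l * Re (cinner r x1)"
      by (simp add: r_def cinner_diff_right cinner_scale_right)
    have eq: "f v - l * Re (cinner v v) = 2 * s * (Re (cinner r (A *v x1)) - l * Re (cinner r x1)) + s\<^sup>2 * (f r - l * Re (cinner r r))"
      unfolding fv nv l_def by (simp add: algebra_simps power2_eq_square)
    have "2 * s * \<beta> + s\<^sup>2 * \<gamma> = f v - l * Re (cinner v v)"
      unfolding eq \<beta>_def \<gamma>_def rr[symmetric] by simp
    then show ?thesis using quadb[OF vW] by linarith
  qed
  have "\<beta> = 0"
  proof (rule ccontr)
    assume "\<beta> \<noteq> 0"
    then have bpos: "\<beta> > 0" using cinner_self_nonneg[of r] by (simp add: \<beta>_def)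
    define s where "s = \<beta> / (\<bar>\<gamma>\<bar> + 1)"
    have spos: "s > 0" using bpos by (simp add: s_def)
    have "s * \<bar>\<gamma>\<bar> < \<beta>"
    proof -
      have "s * \<bar>\<gamma>\<bar> = \<beta> * (\<bar>\<gamma>\<bar> / (\<bar>\<gamma>\<bar> + 1))" by (simp add: s_def)
      also have "\<dots> < \<beta> * 1" using bpos by (intro mult_strict_left_mono) auto
      finally show ?thesis by simp
    qed
    have a1: "s\<^sup>2 * (- \<bar>\<gamma>\<bar>) \<le> s\<^sup>2 * \<gamma>" by (intro mult_left_mono) simp_all
    have a2: "s\<^sup>2 * \<bar>\<gamma>\<bar> = s * (s * \<bar>\<gamma>\<bar>)" by (simp add: power2_eq_square)
    have a3: "s * (s * \<bar>\<gamma>\<bar>) < s * \<beta>" using spos \<open>s * \<bar>\<gamma>\<bar> < \<beta>\<close> by simp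
    have a4: "s * \<beta> > 0" using spos bpos by simp
    have "2 * s * \<beta> + s\<^sup>2 * \<gamma> > 0" using a1 a2 a3 a4 by linarith
    with key[of s] show False by simp
  qed
  then have "r = 0" using cinner_self_eq0[of r] by (simp add: \<beta>_def)
  then have "A *v x1 = complex_of_real l *s x1" by (simp add: r_def)
  moreover have "cinner x1 x1 = 1" using x1n cinner_self_real[of x1] by (metis of_real_1)
  ultimately show ?thesis using x1W unfolding W_def by blast
qed


lemma herm_orthonormal_eigen:
  fixes A :: "complex^'n^'n"
  assumes herm: "adj A = A"
  shows "\<exists>(u::'n \<Rightarrow> complex^'n) (lam::'n \<Rightarrow> complex). (\<forall>i j. cinner (u i) (u j) = (if i = j then 1 else 0)) \<and> (\<forall>i. A *v u i = lam i *s u i)"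
proof -
  have main: "\<exists>(u::'n \<Rightarrow> complex^'n) (lam::'n \<Rightarrow> complex). (\<forall>i\<in>K. \<forall>j\<in>K. cinner (u i) (u j) = (if i = j then 1 else 0)) \<and> (\<forall>i\<in>K. A *v u i = lam i *s u i)"
    if "finite K" for K :: "'n set"
    using that
  proof (induction K rule: finite_induct)
    case empty then show ?case by auto
  next
    case (insert k K)
    then obtain u lam where on: "\<forall>i\<in>K. \<forall>j\<in>K. cinner (u i) (u j) = (if i = j then 1 else 0)"
      and eg: "\<forall>i\<in>K. A *v u i = lam i *s u i" by blast
    have "K \<noteq> UNIV" using insert(2) by auto
    then obtain x0 where "x0 \<noteq> 0" "\<forall>i\<in>K. cinner (u i) x0 = 0" using perp_exists[OF _ on] by blast
    then obtain v l where v: "cinner v v = 1" "\<forall>i\<in>K. cinner (u i) v = 0" "A *v v = l *s v"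
      using herm_eigvec_perp[OF herm _ _ eg] by blast
    have v2: "\<forall>i\<in>K. cinner v (u i) = 0" using v(2) by (metis cinner_commute complex_cnj_zero)
    define u' where "u' = u(k := v)"
    define lam' where "lam' = lam(k := l)"
    have "\<forall>i\<in>insert k K. \<forall>j\<in>insert k K. cinner (u' i) (u' j) = (if i = j then 1 else 0)"
      using on v v2 insert(2) by (auto simp: u'_def)
    moreover have "\<forall>i\<in>insert k K. A *v u' i = lam' i *s u' i"
      using eg v insert(2) by (auto simp: u'_def lam'_def)
    ultimately show ?case by blast
  qed
  have fin: "finite (UNIV::'n set)" by simp
  from main[of UNIV, OF fin] obtain u :: "'n \<Rightarrow> complex^'n" and lam :: "'n \<Rightarrow> complex" where
    "\<forall>i\<in>UNIV. \<forall>j\<in>UNIV. cinner (u i) (u j) = (if i = j then 1 else 0)" "\<forall>i\<in>UNIV. A *v u i = lam i *s u i"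
    by blast
  then show ?thesis by blast
qed

definition colv :: "complex^'n^'n \<Rightarrow> 'n \<Rightarrow> complex^'n" where
  "colv U c = (\<chi> r. U $ r $ c)"

lemma spectral_herm:
  fixes A :: "complex^'n^'n"
  assumes herm: "adj A = A"
  shows "\<exists>U d. unitary U \<and> A = U ** diag_mat (\<lambda>i. complex_of_real (d i)) ** adj U
     \<and> (\<forall>c. complex_of_real (d c) = cinner (colv U c) (A *v colv U c))"
proof -
  obtain u :: "'n \<Rightarrow> complex^'n" and lam :: "'n \<Rightarrow> complex" where on: "\<forall>i j. cinner (u i) (u j) = (if i = j then 1 else 0)"
    and eg: "\<forall>i. A *v u i = lam i *s u i"
    using herm_orthonormal_eigen[OF herm] by blast
  define U :: "complex^'n^'n" where "U = (\<chi> r c. u c $ r)"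
  have colU: "colv U c = u c" for c by (simp add: colv_def U_def vec_eq_iff)
  have UU: "adj U ** U = mat 1"
  proof -
    have "(adj U ** U) $ i $ j = cinner (u i) (u j)" for i j
      by (simp add: adj_def U_def matrix_matrix_mult_def cinner_def)
    then show ?thesis using on by (simp add: vec_eq_iff mat_def)
  qed
  then have UU': "U ** adj U = mat 1" using matrix_left_right_inverse by blast
  have lamr: "lam c = cinner (u c) (A *v u c)" for c
    using eg on by (simp add: cinner_scale_right)
  define d where "d c = Re (lam c)" for c
  have lamd: "lam c = complex_of_real (d c)" for c
    unfolding d_def lamr using herm_quad_real[OF herm] by simp
  have AU: "A ** U = U ** diag_mat (\<lambda>i. complex_of_real (d i))"
  proof -
    have "(A ** U) $ r $ c = (A *v u c) $ r" for r c
      by (simp add: U_def matrix_matrix_mult_def matrix_vector_mult_def)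
    moreover have "(U ** diag_mat (\<lambda>i. complex_of_real (d i))) $ r $ c = u c $ r * d c" for r c
    proof -
      have "(U ** diag_mat (\<lambda>i. complex_of_real (d i))) $ r $ c
          = (\<Sum>k\<in>UNIV. u k $ r * (if k = c then complex_of_real (d k) else 0))"
        by (simp add: U_def matrix_matrix_mult_def diag_mat_def)
      also have "\<dots> = (\<Sum>k\<in>UNIV. if k = c then u c $ r * d c else 0)"
        by (rule sum.cong) auto
      finally show ?thesis by simp
    qed
    ultimately show ?thesis using eg lamd by (simp add: vec_eq_iff mult.commute)
  qed
  have "A = A ** (U ** adj U)" using UU' by simp
  also have "\<dots> = U ** diag_mat (\<lambda>i. complex_of_real (d i)) ** adj U"
    by (simp add: matrix_mul_assoc AU)
  finally have "A = U ** diag_mat (\<lambda>i. complex_of_real (d i)) ** adj U" .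
  moreover have "unitary U" using UU UU' by (simp add: unitary_def)
  moreover have "\<forall>c. complex_of_real (d c) = cinner (colv U c) (A *v colv U c)"
    using lamd lamr colU by simp
  ultimately show ?thesis by blast
qed


lemma unitary_cols: "unitary U \<Longrightarrow> cinner (colv U i) (colv U j) = (if i = j then 1 else 0)"
proof -
  assume "unitary U"
  then have "adj U ** U = mat 1" by (simp add: unitary_def)
  then have "(adj U ** U) $ i $ j = (if i = j then 1 else 0)" by (simp add: mat_def)
  moreover have "(adj U ** U) $ i $ j = cinner (colv U i) (colv U j)"
    by (simp add: adj_def colv_def matrix_matrix_mult_def cinner_def)
  ultimately show ?thesis by simp
qed

lemma positive_def_herm: "positive_def A \<Longrightarrow> adj A = A"
  by (simp add: positive_def_def hermitian_def)
lemma psd_herm: "positive_semidef A \<Longrightarrow> adj A = A"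
  by (simp add: positive_semidef_def hermitian_def)

lemma mat_rpow_spec:
  fixes A :: "complex^'n^'n"
  assumes pd: "positive_def A"
  shows "\<exists>U d. unitary U \<and> (\<forall>i. 0 < d i) \<and> A = U ** diag_mat (\<lambda>i. complex_of_real (d i)) ** adj U \<and>
      mat_rpow A t = U ** diag_mat (\<lambda>i. complex_of_real (d i powr t)) ** adj U"
proof -
  obtain U d where U: "unitary U" and A: "A = U ** diag_mat (\<lambda>i. complex_of_real (d i)) ** adj U"
    and dc: "\<forall>c. complex_of_real (d c) = cinner (colv U c) (A *v colv U c)"
    using spectral_herm[OF positive_def_herm[OF pd]] by blast
  have dpos: "0 < d i" for i
  proof -
    have "colv U i \<noteq> 0" using unitary_cols[OF U, of i i] by auto
    then have "0 < Re (cinner (colv U i) (A *v colv U i))" using pd by (simp add: positive_def_def)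
    also have "\<dots> = d i" using dc by (metis Re_complex_of_real)
    finally show ?thesis .
  qed
  let ?P = "\<lambda>B. \<exists>U d. unitary U \<and> (\<forall>i. 0 < d i) \<and> A = U ** diag_mat (\<lambda>i. complex_of_real (d i)) ** adj U \<and>
      B = U ** diag_mat (\<lambda>i. complex_of_real (d i powr t)) ** adj U"
  have "?P (U ** diag_mat (\<lambda>i. complex_of_real (d i powr t)) ** adj U)"
    using U A dpos by blast
  then have "?P (SOME B. ?P B)" by (rule someI)
  then show ?thesis unfolding mat_rpow_def by simp
qed

lemma cinner_unitary: "unitary U \<Longrightarrow> cinner (adj U *v x) (adj U *v y) = cinner x y"
proof -
  assume U: "unitary U"
  have "cinner (adj U *v x) (adj U *v y) = cinner x (U *v (adj U *v y))"
    by (simp add: cinner_adj)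
  also have "\<dots> = cinner x y" using U by (simp add: matrix_vector_mul_assoc unitary_def)
  finally show ?thesis .
qed

lemma diag_mvec: "(diag_mat f *v z) $ k = f k * z $ k"
proof -
  have "(diag_mat f *v z) $ k = (\<Sum>j\<in>UNIV. if j = k then f k * z $ k else 0)"
    unfolding diag_mat_def matrix_vector_mult_def vec_lambda_beta by (rule sum.cong) auto
  then show ?thesis by simp
qed

lemma quad_diag:
  assumes U: "unitary U"
  shows "cinner x ((U ** diag_mat (\<lambda>i. complex_of_real (f i)) ** adj U) *v x)
     = complex_of_real (\<Sum>k\<in>UNIV. f k * (cmod ((adj U *v x) $ k))\<^sup>2)"
proof -
  define z where "z = adj U *v x"
  have "cinner x ((U ** diag_mat (\<lambda>i. complex_of_real (f i)) ** adj U) *v x)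
      = cinner x (U *v (diag_mat (\<lambda>i. complex_of_real (f i)) *v z))"
    by (simp add: z_def matrix_vector_mul_assoc[symmetric])
  also have "\<dots> = cinner z (diag_mat (\<lambda>i. complex_of_real (f i)) *v z)"
    by (simp add: cinner_adj z_def)
  also have "\<dots> = (\<Sum>k\<in>UNIV. complex_of_real (f k) * (cnj (z $ k) * z $ k))"
    by (simp add: cinner_def diag_mvec mult_ac)
  also have "\<dots> = complex_of_real (\<Sum>k\<in>UNIV. f k * (cmod (z $ k))\<^sup>2)"
    unfolding of_real_sum by (rule sum.cong) (auto simp: mult.commute intro: complex_norm_square[symmetric, unfolded of_real_power])
  finally show ?thesis by (simp add: z_def)
qed

lemma trace_diag_mult: "trace (diag_mat e ** Y) = (\<Sum>k\<in>UNIV. e k * Y $ k $ k)"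
proof -
  have "(diag_mat e ** Y) $ k $ k = e k * Y $ k $ k" for k
  proof -
    have "(diag_mat e ** Y) $ k $ k = (\<Sum>j\<in>UNIV. if j = k then e k * Y $ k $ k else 0)"
      unfolding diag_mat_def matrix_matrix_mult_def vec_lambda_beta by (rule sum.cong) auto
    then show ?thesis by simp
  qed
  then show ?thesis by (simp add: trace_def)
qed

lemma trace_spec:
  fixes V X :: "complex^'n^'n"
  shows "trace ((V ** diag_mat e ** adj V) ** X) = (\<Sum>k\<in>UNIV. e k * cinner (colv V k) (X *v colv V k))"
proof -
  have "trace ((V ** diag_mat e ** adj V) ** X) = trace (V ** (diag_mat e ** adj V ** X))"
    by (simp add: matrix_mul_assoc)
  also have "\<dots> = trace ((diag_mat e ** adj V ** X) ** V)" by (rule trace_mul_sym)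
  also have "\<dots> = trace (diag_mat e ** (adj V ** X ** V))" by (simp add: matrix_mul_assoc)
  also have "\<dots> = (\<Sum>k\<in>UNIV. e k * (adj V ** X ** V) $ k $ k)" by (rule trace_diag_mult)
  also have "\<dots> = (\<Sum>k\<in>UNIV. e k * cinner (colv V k) (X *v colv V k))"
  proof (rule sum.cong[OF refl])
    fix k
    have "(adj V ** X ** V) $ k $ k = cinner (colv V k) (X *v colv V k)"
      apply (simp add: adj_def matrix_matrix_mult_def cinner_def colv_def matrix_vector_mult_def
          sum_distrib_left sum_distrib_right)
      apply (subst sum.swap)
      apply (simp add: mult_ac)
      done
    then show "e k * (adj V ** X ** V) $ k $ k = e k * cinner (colv V k) (X *v colv V k)" by simp
  qed
  finally show ?thesis .
qed


lemma row_eq: "row i A = A $ i" by (simp add: row_def vec_eq_iff)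

lemma rows_finite: "finite (rows (A::complex^'n^'m))"
proof -
  have "rows A = (\<lambda>i. row i A) ` UNIV" by (auto simp: rows_def)
  then show ?thesis by simp
qed

lemma rank1_form:
  fixes M :: "complex^'n^'n"
  assumes "rank M \<le> 1"
  shows "\<exists>c b. \<forall>r s. M $ r $ s = c r * b $ s"
proof -
  obtain B where B: "B \<subseteq> rows M" "vec.independent B" "rows M \<subseteq> vec.span B" "card B = vec.dim (rows M)"
    using vec.basis_exists by blast
  have finB: "finite B" using B(1) rows_finite finite_subset by blast
  have "card B \<le> 1" using B(4) assms by (simp add: row_rank_def_gen)
  then have "B = {} \<or> (\<exists>b. B = {b})" using finB
    by (metis card_0_eq card_1_singletonE le_neq_implies_less less_one)
  then show ?thesis
  proof
    assume "B = {}"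
    then have "M $ r = 0" for r using B(3) by (auto simp: rows_def row_eq)
    then show ?thesis by (intro exI[of _ "\<lambda>_. 0"]) auto
  next
    assume "\<exists>b. B = {b}"
    then obtain b where b: "B = {b}" by blast
    have "\<forall>r. \<exists>k. M $ r = k *s b"
    proof
      fix r
      have "row r M \<in> rows M" by (auto simp: rows_def)
      then have "M $ r \<in> vec.span {b}" using B(3) b by (auto simp: row_eq)
      then show "\<exists>k. M $ r = k *s b" by (auto simp: vec.span_singleton)
    qed
    then obtain c where "\<forall>r. M $ r = c r *s b" by metis
    then show ?thesis by (intro exI[of _ c] exI[of _ b]) auto
  qed
qed

lemma rank1_sandwich:
  fixes M Z :: "complex^'n^'n"
  assumes "rank M \<le> 1"
  shows "(M ** Z ** M) $ r $ s = trace (Z ** M) * M $ r $ s"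
proof -
  obtain c b where cb: "\<forall>r s. M $ r $ s = c r * b $ s" using rank1_form[OF assms] by blast
  have "(M ** Z ** M) $ r $ s = (\<Sum>l\<in>UNIV. \<Sum>k\<in>UNIV. c r * b $ k * Z $ k $ l * (c l * b $ s))"
    by (simp add: matrix_matrix_mult_def cb sum_distrib_right)
  also have "\<dots> = (\<Sum>l\<in>UNIV. \<Sum>k\<in>UNIV. Z $ k $ l * c l * b $ k) * (c r * b $ s)"
    by (simp add: sum_distrib_right sum_distrib_left mult_ac)
  also have "(\<Sum>l\<in>UNIV. \<Sum>k\<in>UNIV. Z $ k $ l * c l * b $ k) = trace (Z ** M)"
    by (simp add: trace_def matrix_matrix_mult_def cb sum_distrib_right mult_ac) (rule sum.swap)
  finally show ?thesis using cb by simp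
qed

lemma rank1_quad:
  fixes M Z :: "complex^'n^'n"
  assumes "rank M \<le> 1" "adj M = M"
  shows "cinner (M *v y) (Z *v (M *v y)) = trace (Z ** M) * cinner y (M *v y)"
proof -
  have "cinner (M *v y) (Z *v (M *v y)) = cinner y (M *v (Z *v (M *v y)))"
    using assms(2) by (metis cinner_adj)
  also have "M *v (Z *v (M *v y)) = (M ** Z ** M) *v y" by (simp add: matrix_vector_mul_assoc matrix_mul_assoc)
  also have "(M ** Z ** M) *v y = trace (Z ** M) *s (M *v y)"
    using rank1_sandwich[OF assms(1)]
    by (simp add: vec_eq_iff matrix_vector_mult_def sum_distrib_left mult_ac)
  finally show ?thesis by (simp add: cinner_scale_right)
qed

lemma proj_quad:
  assumes "adj P = P" "P ** P = P"
  shows "cinner y (P *v y) = cinner (P *v y) (P *v y)"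
proof -
  have "cinner (P *v y) (P *v y) = cinner y (P *v (P *v y))" using assms(1) by (metis cinner_adj)
  also have "P *v (P *v y) = P *v y" using assms(2) by (simp add: matrix_vector_mul_assoc)
  finally show ?thesis by simp
qed

lemma proj_quad_nonneg:
  assumes "adj P = P" "P ** P = P"
  shows "0 \<le> Re (cinner y (P *v y))"
  using proj_quad[OF assms] cinner_self_nonneg by simp

lemma row_mult: "(A ** B) $ r = (A $ r) v* (B::complex^'n^'n)"
  by (simp add: vec_eq_iff matrix_matrix_mult_def vector_matrix_mult_def mult.commute)

lemma vm_sum: "(sum f S) v* (A::complex^'n^'n) = (\<Sum>i\<in>S. f i v* A)"
  by (induction S rule: infinite_finite_induct) (auto simp: vector_matrix_left_distrib)

lemma vm_scale: "(c *s v) v* (A::complex^'n^'n) = c *s (v v* A)"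
  by (simp add: vec_eq_iff vector_matrix_mult_def sum_distrib_left mult_ac)

lemma vm_sum_right: "v v* (sum f S) = (\<Sum>i\<in>S. v v* (f i :: complex^'n^'n))"
  by (induction S rule: infinite_finite_induct) (auto simp: vector_matrix_mult_add_rdistrib)

lemma vm_rows: "v v* (A::complex^'n^'n) = (\<Sum>k\<in>UNIV. v $ k *s A $ k)"
  by (simp add: vec_eq_iff vector_matrix_mult_def mult.commute)

lemma card_nonzero_le_rank:
  fixes M :: "'j \<Rightarrow> complex^'n^'n"
  assumes pvm: "pvm J M" and T: "T \<subseteq> J" and E: "E = (\<Sum>j\<in>T. M j)"
  shows "card {w\<in>T. M w \<noteq> 0} \<le> rank E"
proof -
  define Tn where "Tn = {w\<in>T. M w \<noteq> 0}"
  have fJ: "finite J" and idem: "\<forall>i\<in>J. M i ** M i = M i" and orth: "\<forall>i\<in>J. \<forall>j\<in>J. i \<noteq> j \<longrightarrow> M i ** M j = 0"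
    using pvm by (auto simp: pvm_def)
  have fT: "finite T" using T fJ finite_subset by blast
  have fTn: "finite Tn" using fT by (simp add: Tn_def)
  have "\<forall>w\<in>Tn. \<exists>r. M w $ r \<noteq> 0" by (auto simp: Tn_def vec_eq_iff)
  then obtain rr where rr: "\<forall>w\<in>Tn. M w $ rr w \<noteq> 0" by metis
  define x where "x w = M w $ rr w" for w
  have xM: "x w v* M w' = (if w = w' then x w else 0)" if "w \<in> Tn" "w' \<in> J" for w w'
  proof -
    have "x w v* M w' = (M w ** M w') $ rr w" by (simp add: x_def row_mult)
    also have "\<dots> = (if w = w' then x w else 0)" using that idem orth T by (auto simp: Tn_def x_def)
    finally show ?thesis .
  qed
  have xnz: "x w \<noteq> 0" if "w \<in> Tn" for w using rr that by (simp add: x_def)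
  have injx: "inj_on x Tn"
  proof (rule inj_onI)
    fix w w' assume w: "w \<in> Tn" "w' \<in> Tn" "x w = x w'"
    show "w = w'"
    proof (rule ccontr)
      assume "w \<noteq> w'"
      have "x w = x w v* M w" using xM[of w w] w T by (auto simp: Tn_def)
      also have "\<dots> = x w' v* M w" using w by simp
      also have "\<dots> = 0" using xM[of w' w] w T \<open>w \<noteq> w'\<close> by (auto simp: Tn_def)
      finally show False using xnz w by simp
    qed
  qed
  have xE: "x w = x w v* E" if "w \<in> Tn" for w
  proof -
    have "x w v* E = (\<Sum>w'\<in>T. x w v* M w')" by (simp add: E vm_sum_right)
    also have "\<dots> = (\<Sum>w'\<in>T. if w = w' then x w else 0)"
      by (rule sum.cong[OF refl]) (use xM that T in auto)
    also have "\<dots> = x w" using that fT by (simp add: Tn_def)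
    finally show ?thesis by simp
  qed
  have xspan: "x w \<in> vec.span (rows E)" if "w \<in> Tn" for w
  proof -
    have "x w = (\<Sum>k\<in>UNIV. x w $ k *s E $ k)" using xE[OF that] by (simp add: vm_rows)
    also have "\<dots> \<in> vec.span (rows E)"
      by (intro vec.span_sum vec.span_scale vec.span_base) (auto simp: rows_def row_eq)
    finally show ?thesis .
  qed
  define X where "X = x ` Tn"
  have fX: "finite X" using fTn by (simp add: X_def)
  have indep: "vec.independent X"
  proof (rule vec.independent_if_scalars_zero[OF fX])
    fix f v assume sum0: "(\<Sum>v\<in>X. f v *s v) = 0" and v: "v \<in> X"
    then obtain w0 where w0: "w0 \<in> Tn" "v = x w0" by (auto simp: X_def)
    have "(\<Sum>v\<in>X. f v *s v) = (\<Sum>w\<in>Tn. f (x w) *s x w)"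
      unfolding X_def by (rule sum.reindex[OF injx, unfolded comp_def])
    then have "0 = (\<Sum>w\<in>Tn. f (x w) *s x w) v* M w0" using sum0 by simp
    also have "\<dots> = (\<Sum>w\<in>Tn. f (x w) *s (x w v* M w0))" by (simp add: vm_sum vm_scale)
    also have "\<dots> = (\<Sum>w\<in>Tn. if w = w0 then f (x w) *s x w else 0)"
      by (rule sum.cong[OF refl]) (use xM w0 T in \<open>auto simp: Tn_def\<close>)
    also have "\<dots> = f (x w0) *s x w0" using w0 fTn by simp
    finally have "f (x w0) *s x w0 = 0" by simp
    then show "f v = 0" using xnz[OF w0(1)] w0 by simp
  qed
  have "card Tn = card X" unfolding X_def by (rule card_image[OF injx, symmetric])
  also have "\<dots> \<le> vec.dim (vec.span (rows E))"
    by (rule vec.independent_card_le_dim[OF _ indep]) (use xspan in \<open>auto simp: X_def\<close>)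
  also have "\<dots> = rank E" by (simp add: vec.dim_span row_rank_def_gen)
  finally show ?thesis by (simp add: Tn_def)
qed


lemma mvec_sum: "A *v (sum f S) = (\<Sum>i\<in>S. A *v (f i :: complex^'n))"
  by (induction S rule: infinite_finite_induct) (auto simp: matrix_vector_right_distrib)

lemma quad_cross_le:
  fixes Q :: "complex^'n^'n"
  assumes herm: "adj Q = Q" and psd: "\<forall>x. 0 \<le> Re (cinner x (Q *v x))"
  shows "2 * Re (cinner a (Q *v b)) \<le> Re (cinner a (Q *v a)) + Re (cinner b (Q *v b))"
proof -
  have "0 \<le> Re (cinner (a - b) (Q *v (a - b)))" using psd by blast
  also have "\<dots> = Re (cinner a (Q *v a)) + Re (cinner b (Q *v b)) - Re (cinner a (Q *v b)) - Re (cinner b (Q *v a))"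
    by (simp add: matrix_vector_mult_diff_distrib cinner_diff_left cinner_diff_right)
  also have "Re (cinner b (Q *v a)) = Re (cinner a (Q *v b))"
  proof -
    have "cinner b (Q *v a) = cinner (Q *v b) a" using herm by (metis cinner_adj)
    also have "\<dots> = cnj (cinner a (Q *v b))" by (rule cinner_commute)
    finally show ?thesis by simp
  qed
  finally show ?thesis by simp
qed

lemma quad_sum_le:
  fixes Q :: "complex^'n^'n"
  assumes herm: "adj Q = Q" and psd: "\<forall>x. 0 \<le> Re (cinner x (Q *v x))" and fS: "finite S"
  shows "Re (cinner (\<Sum>i\<in>S. z i) (Q *v (\<Sum>i\<in>S. z i))) \<le> real (card S) * (\<Sum>i\<in>S. Re (cinner (z i) (Q *v z i)))"
proof -
  define q where "q i = Re (cinner (z i) (Q *v z i))" for i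
  have "Re (cinner (\<Sum>i\<in>S. z i) (Q *v (\<Sum>i\<in>S. z i))) = (\<Sum>a\<in>S. \<Sum>b\<in>S. Re (cinner (z a) (Q *v z b)))"
    by (simp add: mvec_sum cinner_sum_left cinner_sum_right Re_sum) (rule sum.swap)
  also have "\<dots> \<le> (\<Sum>a\<in>S. \<Sum>b\<in>S. (q a + q b) / 2)"
  proof (intro sum_mono)
    fix a b
    have "2 * Re (cinner (z a) (Q *v z b)) \<le> q a + q b" using quad_cross_le[OF herm psd] by (simp add: q_def)
    then show "Re (cinner (z a) (Q *v z b)) \<le> (q a + q b) / 2" by simp
  qed
  also have "\<dots> = (real (card S) * (\<Sum>a\<in>S. q a) + real (card S) * (\<Sum>b\<in>S. q b)) / 2"
    by (simp add: sum.distrib sum_divide_distrib[symmetric] sum_distrib_left[symmetric] add_divide_distrib)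
  also have "\<dots> = real (card S) * (\<Sum>i\<in>S. q i)" by simp
  finally show ?thesis by (simp add: q_def)
qed

lemma scalar_key:
  fixes d :: "'k \<Rightarrow> real" and u z :: "'k \<Rightarrow> complex"
  assumes fK: "finite K" and dpos: "\<forall>k. 0 < d k"
    and N: "N = (\<Sum>k\<in>K. (cmod (u k))\<^sup>2)"
    and uz: "(\<Sum>k\<in>K. cnj (u k) * z k) = complex_of_real N"
    and du: "(\<Sum>k\<in>K. d k * (cmod (u k))\<^sup>2) \<le> c * N"
    and c: "0 \<le> c" and t: "0 \<le> t" "t \<le> 1"
  shows "N \<le> c powr t * (\<Sum>k\<in>K. d k powr (- t) * (cmod (z k))\<^sup>2)"
proof -
  define R where "R = (\<Sum>k\<in>K. d k powr (- t) * (cmod (z k))\<^sup>2)"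
  have R0: "0 \<le> R" unfolding R_def by (intro sum_nonneg) simp
  have N0: "0 \<le> N" unfolding N by (intro sum_nonneg) simp
  show ?thesis
  proof (cases "N = 0")
    case True then show ?thesis using R0 by (simp add: R_def[symmetric])
  next
    case False
    then have Npos: "N > 0" using N0 by simp
    define D where "D = (\<Sum>k\<in>K. d k * (cmod (u k))\<^sup>2)"
    have "\<exists>k\<in>K. u k \<noteq> 0"
    proof (rule ccontr)
      assume "\<not> ?thesis" then have "N = 0" unfolding N by simp
      then show False using False by simp
    qed
    then obtain k0 where k0: "k0 \<in> K" "u k0 \<noteq> 0" by blast
    have Dpos: "D > 0"
    proof -
      have "0 < d k0 * (cmod (u k0))\<^sup>2" using dpos k0 by simp
      also have "\<dots> \<le> D" unfolding D_def
        by (rule member_le_sum) (use k0 fK dpos[rule_format, THEN less_imp_le] in \<open>auto intro!: mult_nonneg_nonneg\<close>)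
      finally show ?thesis .
    qed
    define m where "m = D / N"
    have mpos: "m > 0" using Dpos Npos by (simp add: m_def)
    have mc: "m \<le> c" using du Npos by (simp add: m_def D_def pos_divide_le_eq)
    have young: "(d k / m) powr t \<le> t * (d k / m) + (1 - t)" for k
      using Youngs_inequality_0[of t "1 - t" "d k / m" 1] t dpos mpos by simp
    have pw: "d k powr t = m powr t * (d k / m) powr t" for k
      using dpos mpos by (simp add: powr_divide less_imp_le)
    define a1 where "a1 = m powr t * (t / m)"
    define a2 where "a2 = m powr t * (1 - t)"
    have S1: "(\<Sum>k\<in>K. d k powr t * (cmod (u k))\<^sup>2) \<le> m powr t * N"
    proof -
      have "(\<Sum>k\<in>K. d k powr t * (cmod (u k))\<^sup>2) \<le> (\<Sum>k\<in>K. m powr t * (t * (d k / m) + (1 - t)) * (cmod (u k))\<^sup>2)"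
        by (intro sum_mono mult_right_mono) (use young pw in \<open>auto intro: mult_left_mono\<close>)
      also have "\<dots> = (\<Sum>k\<in>K. a1 * (d k * (cmod (u k))\<^sup>2) + a2 * (cmod (u k))\<^sup>2)"
        by (rule sum.cong[OF refl]) (use mpos in \<open>simp add: field_simps a1_def a2_def\<close>)
      also have "\<dots> = a1 * D + a2 * N"
        by (simp only: sum.distrib sum_distrib_left[symmetric] D_def N)
      also have "\<dots> = (m powr t * (t / m)) * D + (m powr t * (1 - t)) * N" by (simp add: a1_def a2_def)
      also have "D = m * N" using Npos by (simp add: m_def)
      also have "(m powr t * (t / m)) * (m * N) + (m powr t * (1 - t)) * N = m powr t * N"
        using mpos by (simp add: field_simps)
      finally show ?thesis .
    qed
    have S2: "m powr t \<le> c powr t" using mpos mc t by (intro powr_mono2) auto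
    have CS: "N\<^sup>2 \<le> (\<Sum>k\<in>K. d k powr t * (cmod (u k))\<^sup>2) * R"
    proof -
      have "N = cmod (\<Sum>k\<in>K. cnj (u k) * z k)" using uz N0 by simp
      also have "\<dots> \<le> (\<Sum>k\<in>K. cmod (u k) * cmod (z k))"
        by (rule order_trans[OF norm_sum]) (simp add: norm_mult)
      also have "\<dots> = (\<Sum>k\<in>K. (d k powr (t/2) * cmod (u k)) * (d k powr (-t/2) * cmod (z k)))"
      proof (rule sum.cong[OF refl])
        fix k
        have "d k powr (t/2) * d k powr (-t/2) = 1" using dpos[rule_format, of k] by (simp add: powr_add[symmetric])
        then show "cmod (u k) * cmod (z k) = (d k powr (t/2) * cmod (u k)) * (d k powr (-t/2) * cmod (z k))"
          by (metis (no_types, lifting) mult.assoc mult.left_commute mult_1)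
      qed
      finally have Nle: "N \<le> (\<Sum>k\<in>K. (d k powr (t/2) * cmod (u k)) * (d k powr (-t/2) * cmod (z k)))" .
      have "N\<^sup>2 \<le> (\<Sum>k\<in>K. (d k powr (t/2) * cmod (u k)) * (d k powr (-t/2) * cmod (z k)))\<^sup>2"
        using Nle N0 by (intro power_mono) auto
      also have "\<dots> \<le> (\<Sum>k\<in>K. (d k powr (t/2) * cmod (u k))\<^sup>2) * (\<Sum>k\<in>K. (d k powr (-t/2) * cmod (z k))\<^sup>2)"
        by (rule Cauchy_Schwarz_ineq_sum)
      also have "(\<Sum>k\<in>K. (d k powr (t/2) * cmod (u k))\<^sup>2) = (\<Sum>k\<in>K. d k powr t * (cmod (u k))\<^sup>2)"
        by (rule sum.cong[OF refl]) (use dpos in \<open>simp add: power_mult_distrib powr_add[symmetric] power2_eq_square\<close>)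
      also have "(\<Sum>k\<in>K. (d k powr (-t/2) * cmod (z k))\<^sup>2) = R"
        unfolding R_def
        by (rule sum.cong[OF refl]) (use dpos in \<open>simp add: power_mult_distrib powr_add[symmetric] power2_eq_square\<close>)
      finally show ?thesis .
    qed
    have "N * N \<le> (c powr t * N) * R"
    proof -
      have "N * N \<le> (\<Sum>k\<in>K. d k powr t * (cmod (u k))\<^sup>2) * R" using CS by (simp add: power2_eq_square)
      also have "\<dots> \<le> (c powr t * N) * R"
        using S1 S2 R0 Npos by (intro mult_right_mono) (auto intro: order_trans mult_right_mono)
      finally show ?thesis .
    qed
    then have "N \<le> c powr t * R" using Npos by (simp add: mult.commute mult.left_commute)
    then show ?thesis by (simp add: R_def)
  qed
qed


lemma herm_cinner_move: "adj P = P \<Longrightarrow> cinner (P *v y) w = cinner y (P *v w)"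
  by (metis cinner_adj)

lemma block_bound:
  fixes E :: "'i \<Rightarrow> complex^'n^'n" and M :: "'j \<Rightarrow> complex^'n^'n"
  assumes pE: "pvm I E" and pM: "pvm J M" and fin: "pvm_finer J M I E"
    and rM: "\<forall>j\<in>J. rank (M j) \<le> 1" and rE: "\<forall>i\<in>I. rank (E i) \<le> w"
    and hR: "adj R = R" and psd: "\<forall>x. 0 \<le> Re (cinner x (R *v x))" and com: "commutes_with R I E"
    and SJ: "S \<subseteq> J" and Sb: "\<forall>j\<in>S. Re (trace (R ** M j)) \<le> \<beta>" and b0: "0 \<le> \<beta>"
    and y: "y = (\<Sum>j\<in>S. M j) *v x"
  shows "Re (cinner y (R *v y)) \<le> real w * \<beta> * Re (cinner y y)"
proof -
  have fI: "finite I" and hE: "\<forall>i\<in>I. adj (E i) = E i" and iE: "\<forall>i\<in>I. E i ** E i = E i"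
    and oE: "\<forall>i\<in>I. \<forall>j\<in>I. i \<noteq> j \<longrightarrow> E i ** E j = 0" and sE: "(\<Sum>i\<in>I. E i) = mat 1"
    using pE by (auto simp: pvm_def)
  have fJ: "finite J" and hM: "\<forall>i\<in>J. adj (M i) = M i" and iM: "\<forall>i\<in>J. M i ** M i = M i"
    and oM: "\<forall>i\<in>J. \<forall>j\<in>J. i \<noteq> j \<longrightarrow> M i ** M j = 0"
    using pM by (auto simp: pvm_def)
  define P where "P = (\<Sum>j\<in>S. M j)"
  have fS: "finite S" using SJ fJ finite_subset by blast
  have MP: "M j ** P = (if j \<in> S then M j else 0)" if "j \<in> J" for j
  proof -
    have "M j ** P = (\<Sum>b\<in>S. M j ** M b)" by (simp add: P_def mult_sum_right)
    also have "\<dots> = (\<Sum>b\<in>S. if j = b then M j else 0)"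
      by (rule sum.cong[OF refl]) (use that SJ iM oM in auto)
    also have "\<dots> = (if j \<in> S then M j else 0)" using fS by simp
    finally show ?thesis .
  qed
  obtain T where T: "\<forall>i\<in>I. T i \<subseteq> J \<and> E i = (\<Sum>j\<in>T i. M j)"
    using fin unfolding pvm_finer_def by metis
  define Tn where "Tn i = {j\<in>T i. M j \<noteq> 0}" for i
  have ysum: "y = (\<Sum>i\<in>I. E i *v y)" by (simp add: sum_mvec[symmetric] sE)
  have cross: "cinner (E a *v y) (R *v (E b *v y)) = (if a = b then cinner (E a *v y) (R *v (E a *v y)) else 0)"
    if "a \<in> I" "b \<in> I" for a b
  proof (cases "a = b")
    case False
    have "cinner (E a *v y) (R *v (E b *v y)) = cinner y (E a *v (R *v (E b *v y)))"
      using hE that by (simp add: herm_cinner_move)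
    also have "E a *v (R *v (E b *v y)) = ((E a ** R) ** E b) *v y" by (simp add: matrix_vector_mul_assoc matrix_mul_assoc)
    also have "(E a ** R) ** E b = R ** (E a ** E b)"
      using com that by (simp add: commutes_with_def matrix_mul_assoc)
    also have "\<dots> = 0" using oE that False by simp
    finally show ?thesis using False by simp
  qed simp
  have dec: "Re (cinner y (R *v y)) = (\<Sum>i\<in>I. Re (cinner (E i *v y) (R *v (E i *v y))))"
  proof -
    have "cinner y (R *v y) = (\<Sum>a\<in>I. \<Sum>b\<in>I. cinner (E a *v y) (R *v (E b *v y)))"
      by (subst (1 2) ysum) (simp add: mvec_sum cinner_sum_left cinner_sum_right, rule sum.swap)
    also have "\<dots> = (\<Sum>a\<in>I. \<Sum>b\<in>I. if a = b then cinner (E a *v y) (R *v (E a *v y)) else 0)"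
      by (intro sum.cong refl) (use cross in auto)
    also have "\<dots> = (\<Sum>a\<in>I. cinner (E a *v y) (R *v (E a *v y)))" using fI by simp
    finally show ?thesis by (simp add: Re_sum)
  qed
  have blk: "Re (cinner (E i *v y) (R *v (E i *v y))) \<le> real w * \<beta> * Re (cinner y (E i *v y))"
    if i: "i \<in> I" for i
  proof -
    have TJ: "T i \<subseteq> J" and Ei: "E i = (\<Sum>j\<in>T i. M j)" using T i by auto
    have fT: "finite (T i)" using TJ fJ finite_subset by blast
    have fTn: "finite (Tn i)" using fT by (simp add: Tn_def)
    have Eiy: "E i *v y = (\<Sum>j\<in>Tn i. M j *v y)"
    proof -
      have "E i *v y = (\<Sum>j\<in>T i. M j *v y)" by (simp add: Ei sum_mvec)
      also have "\<dots> = (\<Sum>j\<in>Tn i. M j *v y)"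
        by (rule sum.mono_neutral_right[OF fT]) (auto simp: Tn_def)
      finally show ?thesis .
    qed
    have Eiy2: "Re (cinner y (E i *v y)) = (\<Sum>j\<in>Tn i. Re (cinner y (M j *v y)))"
      by (simp add: Eiy cinner_sum_right Re_sum)
    have trm: "Re (cinner (M j *v y) (R *v (M j *v y))) \<le> \<beta> * Re (cinner y (M j *v y))"
      if j: "j \<in> Tn i" for j
    proof -
      have jJ: "j \<in> J" using j TJ by (auto simp: Tn_def)
      have rl: "complex_of_real (Re (cinner y (M j *v y))) = cinner y (M j *v y)"
        using proj_quad[of "M j" y] hM iM jJ cinner_self_real by simp
      have nn: "0 \<le> Re (cinner y (M j *v y))" using proj_quad_nonneg hM iM jJ by blast
      have tq: "cinner (M j *v y) (R *v (M j *v y)) = trace (R ** M j) * cinner y (M j *v y)"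
        using rank1_quad rM hM jJ by blast
      obtain r where r: "r = Re (cinner y (M j *v y))" by blast
      have cr: "cinner y (M j *v y) = complex_of_real r" using rl r by simp
      have eq: "Re (cinner (M j *v y) (R *v (M j *v y))) = Re (trace (R ** M j)) * Re (cinner y (M j *v y))"
        unfolding tq cr by simp
      show ?thesis
      proof (cases "j \<in> S")
        case True
        then show ?thesis unfolding eq using Sb nn by (intro mult_right_mono) auto
      next
        case False
        have "M j *v y = 0"
          using MP[OF jJ] False by (simp add: y P_def[symmetric] matrix_vector_mul_assoc)
        then show ?thesis by simp
      qed
    qed
    have nnsum: "0 \<le> (\<Sum>j\<in>Tn i. Re (cinner (M j *v y) (R *v (M j *v y))))"
      using psd by (intro sum_nonneg) auto
    have "Re (cinner (E i *v y) (R *v (E i *v y)))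
        \<le> real (card (Tn i)) * (\<Sum>j\<in>Tn i. Re (cinner (M j *v y) (R *v (M j *v y))))"
      unfolding Eiy by (rule quad_sum_le[OF hR psd fTn])
    also have "\<dots> \<le> real w * (\<Sum>j\<in>Tn i. Re (cinner (M j *v y) (R *v (M j *v y))))"
    proof (rule mult_right_mono[OF _ nnsum])
      have "card (Tn i) \<le> rank (E i)" unfolding Tn_def by (rule card_nonzero_le_rank[OF pM TJ Ei])
      also have "\<dots> \<le> w" using rE i by blast
      finally show "real (card (Tn i)) \<le> real w" by simp
    qed
    also have "\<dots> \<le> real w * (\<Sum>j\<in>Tn i. \<beta> * Re (cinner y (M j *v y)))"
      by (intro mult_left_mono sum_mono trm) auto
    also have "\<dots> = real w * \<beta> * Re (cinner y (E i *v y))"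
      by (simp add: Eiy2 sum_distrib_left mult.assoc)
    finally show ?thesis .
  qed
  have "Re (cinner y (R *v y)) \<le> (\<Sum>i\<in>I. real w * \<beta> * Re (cinner y (E i *v y)))"
    unfolding dec by (intro sum_mono blk)
  also have "\<dots> = real w * \<beta> * Re (cinner y y)"
    by (simp add: sum_distrib_left[symmetric] Re_sum[symmetric] cinner_sum_right[symmetric]
        sum_mvec[symmetric] sE)
  finally show ?thesis .
qed


lemma Re_trace_spec:
  fixes V X :: "complex^'n^'n"
  shows "Re (trace ((V ** diag_mat (\<lambda>i. complex_of_real (e i)) ** adj V) ** X))
     = (\<Sum>k\<in>UNIV. e k * Re (cinner (colv V k) (X *v colv V k)))"
  by (simp add: trace_spec Re_sum)

theorem lemma13:
  fixes I :: "'i set" and E :: "'i \<Rightarrow> complex^'n^'n"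
    and J :: "'j set" and M :: "'j \<Rightarrow> complex^'n^'n"
    and \<rho> \<rho>' :: "complex^'n^'n" and a :: real
  assumes "pvm I E" and "pvm J M"
    and "pvm_width J M = 1"
    and "pvm_finer J M I E"
    and "density_op \<rho>" and "density_op \<rho>'" and "positive_def \<rho>'"
    and "commutes_with \<rho> I E" and "commutes_with \<rho>' I E"
  shows "(\<Sum>\<omega>\<in>{\<omega>\<in>J. - ln (prob_dist M \<rho>' \<omega>) \<ge> a}. prob_dist M \<rho> \<omega>)
    \<le> exp (- (SUP t\<in>{0..1::real}. (a - ln (real (pvm_width I E))) * t
                - ln (Re (trace (\<rho> ** mat_rpow \<rho>' (- t))))))"
proof -
  note pE = assms(1) and pM = assms(2) and wM = assms(3) and fin = assms(4)
    and dR = assms(5) and dR' = assms(6) and pdR' = assms(7) and comR' = assms(9)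
  have fI: "finite I" using pE by (simp add: pvm_def)
  have fJ: "finite J" and hM: "\<forall>i\<in>J. adj (M i) = M i" and iM: "\<forall>i\<in>J. M i ** M i = M i"
    and oM: "\<forall>i\<in>J. \<forall>j\<in>J. i \<noteq> j \<longrightarrow> M i ** M j = 0"
    using pM by (auto simp: pvm_def)
  have rM: "\<forall>j\<in>J. rank (M j) \<le> 1"
  proof
    fix j assume "j \<in> J"
    then have "rank (M j) \<le> Max ((\<lambda>i. rank (M i)) ` J)" using fJ by (intro Max_ge) auto
    then show "rank (M j) \<le> 1" using wM by (simp add: pvm_width_def)
  qed
  define w where "w = pvm_width I E"
  have rE: "\<forall>i\<in>I. rank (E i) \<le> w"
  proof
    fix i assume "i \<in> I"
    then show "rank (E i) \<le> w" using fI by (simp add: w_def pvm_width_def)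
  qed
  have hR': "adj \<rho>' = \<rho>'" using pdR' by (rule positive_def_herm)
  have psdR': "\<forall>x. 0 \<le> Re (cinner x (\<rho>' *v x))"
    using dR' by (simp add: density_op_def positive_semidef_def)
  have psdR: "positive_semidef \<rho>" using dR by (simp add: density_op_def)
  define S where "S = {\<omega>\<in>J. - ln (prob_dist M \<rho>' \<omega>) \<ge> a}"
  define P where "P = (\<Sum>j\<in>S. M j)"
  have SJ: "S \<subseteq> J" by (auto simp: S_def)
  have fS: "finite S" using SJ fJ finite_subset by blast
  have Sb: "\<forall>j\<in>S. Re (trace (\<rho>' ** M j)) \<le> exp (- a)"
  proof
    fix j assume "j \<in> S"
    then have h: "- ln (Re (trace (\<rho>' ** M j))) \<ge> a" by (simp add: S_def prob_dist_def)
    show "Re (trace (\<rho>' ** M j)) \<le> exp (- a)"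
    proof (cases "Re (trace (\<rho>' ** M j)) > 0")
      case True
      then have "Re (trace (\<rho>' ** M j)) = exp (ln (Re (trace (\<rho>' ** M j))))" by simp
      also have "\<dots> \<le> exp (- a)" using h by (subst exp_le_cancel_iff) linarith
      finally show ?thesis .
    next
      case False
      then show ?thesis using exp_gt_zero[of "- a"] by linarith
    qed
  qed
  define c where "c = real w * exp (- a)"
  have c0: "0 \<le> c" by (simp add: c_def)
  have hP: "adj P = P"
  proof -
    have "adj P = (\<Sum>j\<in>S. adj (M j))" by (simp add: P_def adj_sum)
    also have "\<dots> = P" unfolding P_def by (rule sum.cong[OF refl]) (use hM SJ in auto)
    finally show ?thesis .
  qed
  have MP: "M j ** P = (if j \<in> S then M j else 0)" if "j \<in> J" for j
  proof -
    have "M j ** P = (\<Sum>b\<in>S. M j ** M b)" by (simp add: P_def mult_sum_right)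
    also have "\<dots> = (\<Sum>b\<in>S. if j = b then M j else 0)"
      by (rule sum.cong[OF refl]) (use that SJ iM oM in auto)
    also have "\<dots> = (if j \<in> S then M j else 0)" using fS by simp
    finally show ?thesis .
  qed
  have iP: "P ** P = P"
  proof -
    have "P ** P = (\<Sum>j\<in>S. M j ** P)" by (simp add: P_def mult_sum_left)
    also have "\<dots> = P" unfolding P_def by (rule sum.cong[OF refl]) (use MP SJ in \<open>auto simp: P_def\<close>)
    finally show ?thesis .
  qed
  have KQ: "Re (cinner x (P *v x)) \<le> c powr t * Re (cinner x (mat_rpow \<rho>' (- t) *v x))"
    if t: "0 \<le> t" "t \<le> 1" for t x
  proof -
    obtain U d where U: "unitary U" and dpos: "\<forall>i. 0 < d i"
      and R': "\<rho>' = U ** diag_mat (\<lambda>i. complex_of_real (d i)) ** adj U"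
      and B: "mat_rpow \<rho>' (- t) = U ** diag_mat (\<lambda>i. complex_of_real (d i powr (- t))) ** adj U"
      using mat_rpow_spec[OF pdR', of "- t"] by blast
    define y where "y = P *v x"
    have C1: "Re (cinner y (\<rho>' *v y)) \<le> c * Re (cinner y y)"
      using block_bound[OF pE pM fin rM rE hR' psdR' comR' SJ Sb _ y_def[unfolded P_def]]
      by (simp add: c_def)
    define u where "u = adj U *v y"
    define z where "z = adj U *v x"
    define N where "N = Re (cinner y y)"
    have Nu: "N = (\<Sum>k\<in>UNIV. (cmod (u $ k))\<^sup>2)"
    proof -
      have "N = Re (cinner (adj U *v y) (adj U *v y))" using cinner_unitary[OF U] by (simp add: N_def)
      then show ?thesis unfolding u_def by (simp add: cinner_self_Re)
    qed
    have yy: "cinner x (P *v x) = cinner y y"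
      unfolding y_def by (rule proj_quad[OF hP iP])
    have uz: "(\<Sum>k\<in>UNIV. cnj (u $ k) * z $ k) = complex_of_real N"
    proof -
      have "(\<Sum>k\<in>UNIV. cnj (u $ k) * z $ k) = cinner y x"
        unfolding u_def z_def cinner_def[symmetric] by (rule cinner_unitary[OF U])
      also have "\<dots> = cinner x (P *v x)" unfolding y_def by (rule herm_cinner_move[OF hP])
      also have "\<dots> = complex_of_real N" unfolding yy N_def by (rule cinner_self_real[symmetric])
      finally show ?thesis .
    qed
    have du: "(\<Sum>k\<in>UNIV. d k * (cmod (u $ k))\<^sup>2) \<le> c * N"
    proof -
      have "cinner y (\<rho>' *v y) = complex_of_real (\<Sum>k\<in>UNIV. d k * (cmod (u $ k))\<^sup>2)"
        unfolding u_def by (subst R') (rule quad_diag[OF U])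
      then have "Re (cinner y (\<rho>' *v y)) = (\<Sum>k\<in>UNIV. d k * (cmod (u $ k))\<^sup>2)" by simp
      then show ?thesis using C1 by (simp add: N_def)
    qed
    have key: "N \<le> c powr t * (\<Sum>k\<in>UNIV. d k powr (- t) * (cmod (z $ k))\<^sup>2)"
      by (rule scalar_key[OF _ dpos Nu uz du c0 t]) simp
    have "cinner x (mat_rpow \<rho>' (- t) *v x) = complex_of_real (\<Sum>k\<in>UNIV. d k powr (- t) * (cmod (z $ k))\<^sup>2)"
      unfolding z_def B by (rule quad_diag[OF U])
    then have "Re (cinner x (mat_rpow \<rho>' (- t) *v x)) = (\<Sum>k\<in>UNIV. d k powr (- t) * (cmod (z $ k))\<^sup>2)" by simp
    moreover have "Re (cinner x (P *v x)) = N" by (simp add: yy N_def)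
    ultimately show ?thesis using key by simp
  qed
  have LHS: "(\<Sum>\<omega>\<in>S. prob_dist M \<rho> \<omega>) = Re (trace (\<rho> ** P))"
    by (simp add: prob_dist_def P_def mult_sum_right trace_sum Re_sum)
  obtain V e where Rdec: "\<rho> = V ** diag_mat (\<lambda>i. complex_of_real (e i)) ** adj V"
    and ec: "\<forall>k. complex_of_real (e k) = cinner (colv V k) (\<rho> *v colv V k)"
    using spectral_herm[OF psd_herm[OF psdR]] by blast
  have e0: "0 \<le> e k" for k
  proof -
    have "e k = Re (cinner (colv V k) (\<rho> *v colv V k))" using ec by (metis Re_complex_of_real)
    then show ?thesis using psdR by (simp add: positive_semidef_def)
  qed
  have TR: "Re (trace (\<rho> ** P)) \<le> c powr t * Re (trace (\<rho> ** mat_rpow \<rho>' (- t)))"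
    if t: "0 \<le> t" "t \<le> 1" for t
  proof -
    have "Re (trace (\<rho> ** P)) = (\<Sum>k\<in>UNIV. e k * Re (cinner (colv V k) (P *v colv V k)))"
      by (subst Rdec) (rule Re_trace_spec)
    also have "\<dots> \<le> (\<Sum>k\<in>UNIV. e k * (c powr t * Re (cinner (colv V k) (mat_rpow \<rho>' (- t) *v colv V k))))"
      by (intro sum_mono mult_left_mono KQ[OF t] e0)
    also have "\<dots> = c powr t * (\<Sum>k\<in>UNIV. e k * Re (cinner (colv V k) (mat_rpow \<rho>' (- t) *v colv V k)))"
      by (simp add: sum_distrib_left mult_ac)
    also have "(\<Sum>k\<in>UNIV. e k * Re (cinner (colv V k) (mat_rpow \<rho>' (- t) *v colv V k)))
        = Re (trace (\<rho> ** mat_rpow \<rho>' (- t)))"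
      by (subst Rdec) (rule Re_trace_spec[symmetric])
    finally show ?thesis .
  qed
  define L where "L = (\<Sum>\<omega>\<in>S. prob_dist M \<rho> \<omega>)"
  have "L \<le> exp (- (SUP t\<in>{0..1::real}. (a - ln (real w)) * t - ln (Re (trace (\<rho> ** mat_rpow \<rho>' (- t))))))"
  proof (cases "L > 0")
    case False
    then show ?thesis
      using exp_gt_zero[of "- (SUP t\<in>{0..1::real}. (a - ln (real w)) * t - ln (Re (trace (\<rho> ** mat_rpow \<rho>' (- t)))))"]
      by linarith
  next
    case True
    have bound: "(a - ln (real w)) * t - ln (Re (trace (\<rho> ** mat_rpow \<rho>' (- t)))) \<le> - ln L"
      if "t \<in> {0..1}" for t
    proof -
      define X where "X = Re (trace (\<rho> ** mat_rpow \<rho>' (- t)))"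
      have LX: "L \<le> c powr t * X" using TR[of t] that LHS by (simp add: L_def X_def)
      have cpos: "c > 0"
      proof (rule ccontr)
        assume "\<not> c > 0" then have "c = 0" using c0 by simp
        then show False using LX True by simp
      qed
      have wpos: "real w > 0" using cpos by (simp add: c_def zero_less_mult_iff)
      have cp: "c powr t > 0" using cpos by simp
      have Xpos: "X > 0"
      proof (rule ccontr)
        assume "\<not> X > 0"
        then have "c powr t * X \<le> 0" using cp by (simp add: mult_nonneg_nonpos)
        then show False using LX True by linarith
      qed
      have lcX: "0 < c powr t * X" using cp Xpos by simp
      have "ln L \<le> ln (c powr t * X)" using LX True lcX by (subst ln_le_cancel_iff) auto
      also have "\<dots> = t * ln c + ln X" using cpos Xpos by (simp add: ln_mult ln_powr)
      also have "ln c = ln (real w) - a" using wpos by (simp add: c_def ln_mult)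
      finally have lL: "ln L \<le> t * (ln (real w) - a) + ln X" .
      have "(a - ln (real w)) * t = - (t * (ln (real w) - a))" by (simp add: algebra_simps)
      then show ?thesis using lL unfolding X_def by linarith
    qed
    have "(SUP t\<in>{0..1::real}. (a - ln (real w)) * t - ln (Re (trace (\<rho> ** mat_rpow \<rho>' (- t))))) \<le> - ln L"
      by (rule cSUP_least) (use bound in auto)
    then have "exp (- (- ln L)) \<le> exp (- (SUP t\<in>{0..1::real}. (a - ln (real w)) * t - ln (Re (trace (\<rho> ** mat_rpow \<rho>' (- t))))))"
      by simp
    then show ?thesis using True by simp
  qed
  then show ?thesis by (simp add: L_def S_def w_def)
qed

end
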